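(* Assume Assumptions (LS), (UT) and (LT) below hold, with $\alpha>0$ the common exponent in (UT) and (LT). Let $K>0$, let $r\in\mathbb{N}$ and $w\in\mathbb{Z}$ with $|w|\le Kr^{5/6}$, let $\mathbb{L}_{\mathrm{up}}$ be the set of lattice points on the segment joining $(r-w-r^{2/3},r+w+r^{2/3})$ and $(r-w+r^{2/3},r+w-r^{2/3})$, and define $$\widetilde Z=\sup_{v\in\mathbb{L}_{\mathrm{up}}}\left(X_v-\mathbb{E}[X_v]\right),\qquad X_v=X_{(1,1),v}.$$ There exist $c>0$, $\theta_0=\theta_0(K)$ and $r_0$ such that for all $\theta>\theta_0$ and $r>r_0$, $$\mathbb{P}\left(\widetilde Z>\theta r^{1/3}\right)\le\exp(-c\theta^\alpha).$$
   Context: Let $\{\xi_v:v\in\mathbb{Z}^2\}$ be i.i.d. random variables with a common law $\nu$ supported on $[0,\infty)$. A directed path is an up-right nearest-neighbour path in $\mathbb{Z}^2$, and its weight is $\ell(\gamma)=\sum_{u\in\gamma}\xi_u$. For $u\preceq v$ coordinatewise, $X_{u,v}=\max_{\gamma:u\to v}\ell(\gamma)$ over directed paths from $u$ to $v$ ($-\infty$ if none). For $r\in\mathbb{N}$, $z\in\mathbb{Z}$, $X_r^z=X_{(1,1),(r-z,r+z)}$ and $X_r=X_r^0$. It is assumed that $\mu=\lim_{r\to\infty}r^{-1}\mathbb{E}[X_r]<\infty$. Assumption (LS): there exist positive finite constants $\rho,G,H,g_1,g_2$ such that for all large enough $r$ and all $z\in[-\rho r,\rho r]$, $\mathbb{E}[X_r^z]\in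 \mu r-G\frac{z^2}{r}+\left[-H\frac{z^4}{r^3},0\right]+\left[-g_1r^{1/3},-g_2r^{1/3}\right]$. Assumptions (UT) and (LT): there exists $\alpha>0$ such that for every $\varepsilon>0$ there exist positive finite $c,\theta_0,r_0$ (depending only on $\varepsilon$) such that for all $r>r_0$, $\theta>\theta_0$ and $|z|\le(1-\varepsilon)r$: (UT) $\mathbb{P}(X_r^z-\mathbb{E}[X_r^z]>\theta r^{1/3})\le\exp(-c\theta^\alpha)$ and (LT) $\mathbb{P}(X_r^z-\mathbb{E}[X_r^z]<-\theta r^{1/3})\le\exp(-c\theta^\alpha)$. *)

theory Defs
  imports "HOL-Probability.Probability"
begin

type_synonym pt = "int \<times> int"

definition pt_le :: "pt \<Rightarrow> pt \<Rightarrow> bool" where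
  "pt_le u v \<longleftrightarrow> fst u \<le> fst v \<and> snd u \<le> snd v"

definition directed_path :: "pt list \<Rightarrow> pt \<Rightarrow> pt \<Rightarrow> bool" where
  "directed_path \<gamma> u v \<longleftrightarrow> \<gamma> \<noteq> [] \<and> hd \<gamma> = u \<and> last \<gamma> = v \<and>
     (\<forall>i. Suc i < length \<gamma> \<longrightarrow>
        \<gamma> ! Suc i = (fst (\<gamma> ! i) + 1, snd (\<gamma> ! i)) \<or>
        \<gamma> ! Suc i = (fst (\<gamma> ! i), snd (\<gamma> ! i) + 1))"

definition path_weight :: "(pt \<Rightarrow> 'w \<Rightarrow> real) \<Rightarrow> pt list \<Rightarrow> 'w \<Rightarrow> real" where
  "path_weight \<xi> \<gamma> \<omega> = (\<Sum>p\<leftarrow>\<gamma>. \<xi> p \<omega>)"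

text \<open>When no directed path exists (u not below v) the paper
  sets the value to -infinity; here the (irrelevant) value 0 is used and every place where
  the paper's convention matters is guarded explicitly by pt_le.\<close>
definition LPP :: "(pt \<Rightarrow> 'w \<Rightarrow> real) \<Rightarrow> pt \<Rightarrow> pt \<Rightarrow> 'w \<Rightarrow> real" where
  "LPP \<xi> u v \<omega> = (if pt_le u v
      then Max ((\<lambda>\<gamma>. path_weight \<xi> \<gamma> \<omega>) ` {\<gamma>. directed_path \<gamma> u v}) else 0)"

definition Xrz :: "(pt \<Rightarrow> 'w \<Rightarrow> real) \<Rightarrow> nat \<Rightarrow> int \<Rightarrow> 'w \<Rightarrow> real" where
  "Xrz \<xi> r z = LPP \<xi> (1,1) (int r - z, int r + z)"

definition Lup :: "nat \<Rightarrow> int \<Rightarrow> pt set" where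
  "Lup r w = {p. (real_of_int (fst p), real_of_int (snd p)) \<in>
     closed_segment (real r - real_of_int w - real r powr (2/3), real r + real_of_int w + real r powr (2/3))
                    (real r - real_of_int w + real r powr (2/3), real r + real_of_int w - real r powr (2/3))}"

definition Ztilde :: "'w measure \<Rightarrow> (pt \<Rightarrow> 'w \<Rightarrow> real) \<Rightarrow> nat \<Rightarrow> int \<Rightarrow> 'w \<Rightarrow> real" where
  "Ztilde M \<xi> r w \<omega> = (SUP v\<in>Lup r w. LPP \<xi> (1,1) v \<omega> - (\<integral>\<omega>'. LPP \<xi> (1,1) v \<omega>' \<partial>M))"

end

theory Submission
  imports Defs
begin

definition shift :: "pt \<Rightarrow> pt \<Rightarrow> pt" where
  "shift s p = (fst p + fst s, snd p + snd s)"

definition box :: "pt \<Rightarrow> pt \<Rightarrow> pt set" where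
  "box u v = {p. pt_le u p \<and> pt_le p v}"

definition stepr :: "pt \<Rightarrow> pt \<Rightarrow> bool" where
  "stepr p q \<longleftrightarrow> q = (fst p + 1, snd p) \<or> q = (fst p, snd p + 1)"

lemma dp_single: "directed_path [p] u v \<longleftrightarrow> p = u \<and> p = v"
  unfolding directed_path_def by auto

lemma dp_nil: "\<not> directed_path [] u v"
  unfolding directed_path_def by auto

lemma dp_cons2: "directed_path (p # q # rest) u v \<longleftrightarrow> p = u \<and> stepr p q \<and> directed_path (q # rest) q v"
proof
  assume H: "directed_path (p # q # rest) u v"
  have "\<forall>i. Suc i < length (q # rest) \<longrightarrow>
        (q # rest) ! Suc i = (fst ((q # rest) ! i) + 1, snd ((q # rest) ! i)) \<or>
        (q # rest) ! Suc i = (fst ((q # rest) ! i), snd ((q # rest) ! i) + 1)"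
  proof (intro allI impI)
    fix i assume "Suc i < length (q # rest)"
    then have "Suc (Suc i) < length (p # q # rest)" by simp
    then show "(q # rest) ! Suc i = (fst ((q # rest) ! i) + 1, snd ((q # rest) ! i)) \<or>
        (q # rest) ! Suc i = (fst ((q # rest) ! i), snd ((q # rest) ! i) + 1)"
      using H unfolding directed_path_def by (metis nth_Cons_Suc)
  qed
  moreover have "stepr p q" using H unfolding directed_path_def stepr_def
    by (metis length_Cons nth_Cons_0 nth_Cons_Suc zero_less_Suc Suc_less_eq)
  ultimately show "p = u \<and> stepr p q \<and> directed_path (q # rest) q v"
    using H unfolding directed_path_def by auto
next
  assume H: "p = u \<and> stepr p q \<and> directed_path (q # rest) q v"
  show "directed_path (p # q # rest) u v"
    unfolding directed_path_def
  proof (intro conjI allI impI)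
    fix i assume i: "Suc i < length (p # q # rest)"
    show "(p # q # rest) ! Suc i = (fst ((p # q # rest) ! i) + 1, snd ((p # q # rest) ! i)) \<or>
        (p # q # rest) ! Suc i = (fst ((p # q # rest) ! i), snd ((p # q # rest) ! i) + 1)"
    proof (cases i)
      case 0 then show ?thesis using H by (auto simp: stepr_def)
    next
      case (Suc k)
      then have "Suc k < length (q # rest)" using i by simp
      then show ?thesis using H Suc unfolding directed_path_def by simp
    qed
  qed (use H in \<open>auto simp: directed_path_def\<close>)
qed

lemma dp_hd: "directed_path (p # rest) u v \<Longrightarrow> p = u"
  by (simp add: directed_path_def)

lemma dp_props:
  "directed_path \<gamma> u v \<Longrightarrow> pt_le u v \<and> set \<gamma> \<subseteq> box u v \<and>
     int (length \<gamma>) = fst v + snd v - fst u - snd u + 1"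
proof (induction \<gamma> arbitrary: u)
  case Nil then show ?case by (simp add: dp_nil)
next
  case (Cons p rest)
  show ?case
  proof (cases rest)
    case Nil then show ?thesis using Cons.prems by (auto simp add: dp_single box_def pt_le_def)
  next
    fix q rest' assume Cons2: "rest = q # rest'"
    have H: "p = u" "stepr p q" "directed_path rest q v" using Cons.prems Cons2 dp_cons2 by auto
    have IH: "pt_le q v \<and> set rest \<subseteq> box q v \<and> int (length rest) = fst v + snd v - fst q - snd q + 1"
      using Cons.IH H(3) by blast
    have uq: "pt_le u q" "fst q + snd q = fst u + snd u + 1"
      using H(1,2) by (auto simp: stepr_def pt_le_def)
    have "box q v \<subseteq> box u v" using uq(1) by (auto simp: box_def pt_le_def)
    moreover have "u \<in> box u v" using uq IH by (auto simp: box_def pt_le_def)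
    ultimately show ?thesis using IH uq H(1) by (auto simp: pt_le_def)
  qed
qed

lemma finite_box: "finite (box u v)"
proof -
  have "box u v \<subseteq> {fst u..fst v} \<times> {snd u..snd v}" by (auto simp: box_def pt_le_def)
  then show ?thesis by (rule finite_subset) auto
qed

lemma finite_paths: "finite {\<gamma>. directed_path \<gamma> u v}"
proof -
  have "{\<gamma>. directed_path \<gamma> u v} \<subseteq> {xs. set xs \<subseteq> box u v \<and> length xs = nat (fst v + snd v - fst u - snd u + 1)}"
    using dp_props by fastforce
  then show ?thesis by (rule finite_subset) (intro finite_lists_length_eq finite_box)
qed

lemma exists_path: "pt_le u v \<Longrightarrow> \<exists>\<gamma>. directed_path \<gamma> u v"
proof (induction "nat (fst v + snd v - fst u - snd u)" arbitrary: u)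
  case 0
  then have "u = v" by (auto simp: pt_le_def prod_eq_iff)
  then show ?case using dp_single by blast
next
  case (Suc n)
  show ?case
  proof (cases "fst u < fst v")
    case True
    define q where "q = (fst u + 1, snd u)"
    have "pt_le q v" "n = nat (fst v + snd v - fst q - snd q)" using True Suc.prems Suc.hyps(2)
      by (auto simp: q_def pt_le_def)
    then obtain \<gamma> where g: "directed_path \<gamma> q v" using Suc.hyps(1) by blast
    then obtain rest where "\<gamma> = q # rest" using dp_hd by (cases \<gamma>) (auto simp: dp_nil)
    then have "directed_path (u # \<gamma>) u v" using g dp_cons2 by (simp add: stepr_def q_def)
    then show ?thesis by blast
  next
    case False
    define q where "q = (fst u, snd u + 1)"
    have "pt_le q v" "n = nat (fst v + snd v - fst q - snd q)" using False Suc.prems Suc.hyps(2)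
      by (auto simp: q_def pt_le_def)
    then obtain \<gamma> where g: "directed_path \<gamma> q v" using Suc.hyps(1) by blast
    then obtain rest where "\<gamma> = q # rest" using dp_hd by (cases \<gamma>) (auto simp: dp_nil)
    then have "directed_path (u # \<gamma>) u v" using g dp_cons2 by (simp add: stepr_def q_def)
    then show ?thesis by blast
  qed
qed

lemma dp_append:
  "directed_path \<gamma>1 u v \<Longrightarrow> directed_path \<gamma>2 v' w \<Longrightarrow> stepr v v' \<Longrightarrow> directed_path (\<gamma>1 @ \<gamma>2) u w"
proof (induction \<gamma>1 arbitrary: u)
  case Nil then show ?case by (simp add: dp_nil)
next
  case (Cons p rest)
  show ?case
  proof (cases rest)
    case Nil
    then have "p = u" "p = v" using Cons.prems dp_single by auto
    moreover obtain q r2 where "\<gamma>2 = q # r2" using Cons.prems(2) by (cases \<gamma>2) (auto simp: dp_nil)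
    moreover have "q = v'" using Cons.prems(2) calculation dp_hd by blast
    ultimately show ?thesis using Cons.prems Nil by (simp add: dp_cons2)
  next
    fix q rest' assume Cons2: "rest = q # rest'"
    have H: "p = u" "stepr p q" "directed_path rest q v" using Cons.prems Cons2 dp_cons2 by auto
    have "directed_path (rest @ \<gamma>2) q w" using Cons.IH H(3) Cons.prems by blast
    then show ?thesis using H Cons2 by (simp add: dp_cons2)
  qed
qed

lemma dp_shift:
  "directed_path \<gamma> u v \<Longrightarrow> directed_path (map (shift s) \<gamma>) (shift s u) (shift s v)"
proof (induction \<gamma> arbitrary: u)
  case Nil then show ?case by (simp add: dp_nil)
next
  case (Cons p rest)
  show ?case
  proof (cases rest)
    case Nil then show ?thesis using Cons.prems by (auto simp add: dp_single)
  next
    fix q rest' assume Cons2: "rest = q # rest'"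
    have H: "p = u" "stepr p q" "directed_path rest q v" using Cons.prems Cons2 dp_cons2 by auto
    have "directed_path (map (shift s) rest) (shift s q) (shift s v)" using Cons.IH H(3) by blast
    moreover have "stepr (shift s p) (shift s q)" using H(2) by (auto simp: stepr_def shift_def)
    ultimately show ?thesis using H Cons2 by (simp add: dp_cons2)
  qed
qed

lemma paths_nonempty: "pt_le u v \<Longrightarrow> {\<gamma>. directed_path \<gamma> u v} \<noteq> {}"
  using exists_path by blast

lemma lpp_ge:
  assumes "directed_path \<gamma> u v"
  shows "path_weight \<xi> \<gamma> \<omega> \<le> LPP \<xi> u v \<omega>"
proof -
  have "pt_le u v" using dp_props[OF assms] by blast
  then have "LPP \<xi> u v \<omega> = Max ((\<lambda>\<gamma>. path_weight \<xi> \<gamma> \<omega>) ` {\<gamma>. directed_path \<gamma> u v})"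
    by (simp add: LPP_def)
  moreover have "path_weight \<xi> \<gamma> \<omega> \<le> Max ((\<lambda>\<gamma>. path_weight \<xi> \<gamma> \<omega>) ` {\<gamma>. directed_path \<gamma> u v})"
    by (rule Max_ge) (use finite_paths assms in auto)
  ultimately show ?thesis by simp
qed

lemma lpp_attained:
  assumes "pt_le u v"
  shows "\<exists>\<gamma>. directed_path \<gamma> u v \<and> LPP \<xi> u v \<omega> = path_weight \<xi> \<gamma> \<omega>"
proof -
  have "Max ((\<lambda>\<gamma>. path_weight \<xi> \<gamma> \<omega>) ` {\<gamma>. directed_path \<gamma> u v}) \<in> (\<lambda>\<gamma>. path_weight \<xi> \<gamma> \<omega>) ` {\<gamma>. directed_path \<gamma> u v}"
    by (rule Max_in) (simp_all only: finite_imageI[OF finite_paths] image_is_empty paths_nonempty[OF assms] not_False_eq_True)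
  moreover have "LPP \<xi> u v \<omega> = Max ((\<lambda>\<gamma>. path_weight \<xi> \<gamma> \<omega>) ` {\<gamma>. directed_path \<gamma> u v})"
    using assms by (simp add: LPP_def)
  ultimately obtain \<gamma> where "directed_path \<gamma> u v" "LPP \<xi> u v \<omega> = path_weight \<xi> \<gamma> \<omega>"
    by (auto simp del: LPP_def)
  then show ?thesis by blast
qed

lemma lpp_super:
  assumes uv: "pt_le u v" and vw: "pt_le (fst v + 1, snd v + 1) w" and nn: "\<xi> (fst v + 1, snd v) \<omega> \<ge> 0"
  shows "LPP \<xi> u v \<omega> + LPP \<xi> (fst v + 1, snd v + 1) w \<omega> \<le> LPP \<xi> u w \<omega>"
proof -
  obtain \<gamma>1 where g1: "directed_path \<gamma>1 u v" "LPP \<xi> u v \<omega> = path_weight \<xi> \<gamma>1 \<omega>"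
    using lpp_attained[OF uv, of \<xi> \<omega>] by (elim exE conjE) (rule that)
  obtain \<gamma>2 where g2: "directed_path \<gamma>2 (fst v + 1, snd v + 1) w" "LPP \<xi> (fst v + 1, snd v + 1) w \<omega> = path_weight \<xi> \<gamma>2 \<omega>"
    using lpp_attained[OF vw, of \<xi> \<omega>] by (elim exE conjE) (rule that)
  obtain a rest where r0: "\<gamma>2 = a # rest" using g2(1) dp_nil by (cases \<gamma>2) auto
  have "a = (fst v + 1, snd v + 1)" using g2(1) unfolding r0 by (rule dp_hd)
  then have r: "\<gamma>2 = (fst v + 1, snd v + 1) # rest" using r0 by simp
  have "directed_path ((fst v + 1, snd v) # \<gamma>2) (fst v + 1, snd v) w"
    unfolding r dp_cons2 using g2(1) r by (simp add: stepr_def)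
  moreover have "stepr v (fst v + 1, snd v)" by (simp add: stepr_def)
  ultimately have "directed_path (\<gamma>1 @ (fst v + 1, snd v) # \<gamma>2) u w"
    using g1(1) dp_append by blast
  then have "path_weight \<xi> (\<gamma>1 @ (fst v + 1, snd v) # \<gamma>2) \<omega> \<le> LPP \<xi> u w \<omega>" by (rule lpp_ge)
  moreover have "path_weight \<xi> (\<gamma>1 @ (fst v + 1, snd v) # \<gamma>2) \<omega> = path_weight \<xi> \<gamma>1 \<omega> + \<xi> (fst v + 1, snd v) \<omega> + path_weight \<xi> \<gamma>2 \<omega>"
    by (simp add: path_weight_def)
  ultimately show ?thesis using g1 g2 nn by linarith
qed

lemma lpp_local:
  assumes "\<And>p. p \<in> box u v \<Longrightarrow> \<xi> p \<omega> = \<xi>' p \<omega>'"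
  shows "LPP \<xi> u v \<omega> = LPP \<xi>' u v \<omega>'"
proof -
  have "path_weight \<xi> \<gamma> \<omega> = path_weight \<xi>' \<gamma> \<omega>'" if "directed_path \<gamma> u v" for \<gamma>
  proof -
    have "set \<gamma> \<subseteq> box u v" using dp_props[OF that] by blast
    then have M: "map (\<lambda>p. \<xi> p \<omega>) \<gamma> = map (\<lambda>p. \<xi>' p \<omega>') \<gamma>" using assms by (auto intro!: map_cong)
    show ?thesis unfolding path_weight_def M by (rule refl)
  qed
  then have "(\<lambda>\<gamma>. path_weight \<xi> \<gamma> \<omega>) ` {\<gamma>. directed_path \<gamma> u v} = (\<lambda>\<gamma>. path_weight \<xi>' \<gamma> \<omega>') ` {\<gamma>. directed_path \<gamma> u v}"
    by (intro image_cong) auto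
  then show ?thesis unfolding LPP_def by simp
qed

lemma shift_shift: "shift (- fst s, - snd s) (shift s p) = p"
  by (simp add: shift_def)

lemma lpp_shift:
  "LPP \<xi> (shift s u) (shift s v) \<omega> = LPP (\<lambda>p. \<xi> (shift s p)) u v \<omega>"
proof -
  have le: "pt_le (shift s u) (shift s v) \<longleftrightarrow> pt_le u v" by (auto simp: pt_le_def shift_def)
  have P: "{\<gamma>. directed_path \<gamma> (shift s u) (shift s v)} = map (shift s) ` {\<gamma>. directed_path \<gamma> u v}"
  proof
    show "map (shift s) ` {\<gamma>. directed_path \<gamma> u v} \<subseteq> {\<gamma>. directed_path \<gamma> (shift s u) (shift s v)}"
      using dp_shift by blast
  next
    show "{\<gamma>. directed_path \<gamma> (shift s u) (shift s v)} \<subseteq> map (shift s) ` {\<gamma>. directed_path \<gamma> u v}"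
    proof
      fix \<gamma> assume "\<gamma> \<in> {\<gamma>. directed_path \<gamma> (shift s u) (shift s v)}"
      then have "directed_path (map (shift (- fst s, - snd s)) \<gamma>) u v"
        using dp_shift[of \<gamma> "shift s u" "shift s v" "(- fst s, - snd s)"] by (simp add: shift_shift)
      moreover have "\<gamma> = map (shift s) (map (shift (- fst s, - snd s)) \<gamma>)"
        by (induction \<gamma>) (auto simp: shift_def)
      ultimately show "\<gamma> \<in> map (shift s) ` {\<gamma>. directed_path \<gamma> u v}" by blast
    qed
  qed
  have W: "path_weight \<xi> (map (shift s) \<gamma>) \<omega> = path_weight (\<lambda>p. \<xi> (shift s p)) \<gamma> \<omega>" for \<gamma>
    by (simp add: path_weight_def o_def)
  show ?thesis unfolding LPP_def le P image_image W ..
qed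

definition lfun :: "pt \<Rightarrow> pt \<Rightarrow> (pt \<Rightarrow> real) \<Rightarrow> real" where
  "lfun a b x = LPP (\<lambda>p (_::unit). x p) a b ()"

lemma sumlist_meas:
  "set \<gamma> \<subseteq> S \<Longrightarrow> (\<lambda>x::'a\<Rightarrow>real. \<Sum>p\<leftarrow>\<gamma>. x p) \<in> borel_measurable (PiM S (\<lambda>_. borel))"
proof (induction \<gamma>)
  case Nil then show ?case by simp
next
  case (Cons p rest)
  then have "p \<in> S" "set rest \<subseteq> S" by auto
  then have 1: "(\<lambda>x::'a\<Rightarrow>real. x p) \<in> borel_measurable (PiM S (\<lambda>_. borel))"
    by (intro measurable_component_singleton)
  have "(\<lambda>x::'a\<Rightarrow>real. x p + (\<Sum>p\<leftarrow>rest. x p)) \<in> borel_measurable (PiM S (\<lambda>_. borel))"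
    using borel_measurable_add[OF 1 Cons.IH[OF \<open>set rest \<subseteq> S\<close>]] by simp
  then show ?case by simp
qed

lemma lfun_meas:
  assumes "box a b \<subseteq> S"
  shows "lfun a b \<in> borel_measurable (PiM S (\<lambda>_. borel))"
proof (cases "pt_le a b")
  case True
  have fin: "finite {\<gamma>. directed_path \<gamma> a b}" by (rule finite_paths)
  have each: "\<forall>\<gamma>\<in>{\<gamma>. directed_path \<gamma> a b}. (\<lambda>x::pt\<Rightarrow>real. \<Sum>p\<leftarrow>\<gamma>. x p) \<in> borel_measurable (PiM S (\<lambda>_. borel))"
  proof
    fix \<gamma> assume "\<gamma> \<in> {\<gamma>. directed_path \<gamma> a b}"
    then have "set \<gamma> \<subseteq> S" using dp_props assms by blast
    then show "(\<lambda>x::pt\<Rightarrow>real. \<Sum>p\<leftarrow>\<gamma>. x p) \<in> borel_measurable (PiM S (\<lambda>_. borel))" by (rule sumlist_meas)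
  qed
  note R = borel_measurable_Max[OF fin, of "\<lambda>\<gamma> (x::pt\<Rightarrow>real). \<Sum>p\<leftarrow>\<gamma>. x p" "PiM S (\<lambda>_. borel)"]
  have "(\<lambda>x::pt\<Rightarrow>real. Max ((\<lambda>\<gamma>. \<Sum>p\<leftarrow>\<gamma>. x p) ` {\<gamma>. directed_path \<gamma> a b})) \<in> borel_measurable (PiM S (\<lambda>_. borel))"
    by (rule R) (use each in auto)
  moreover have "lfun a b = (\<lambda>x. Max ((\<lambda>\<gamma>. \<Sum>p\<leftarrow>\<gamma>. x p) ` {\<gamma>. directed_path \<gamma> a b}))"
    using True by (simp add: lfun_def LPP_def path_weight_def fun_eq_iff)
  ultimately show ?thesis by simp
next
  case False
  then have "lfun a b = (\<lambda>x. 0)" by (simp add: lfun_def LPP_def fun_eq_iff)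
  then show ?thesis by simp
qed

lemma lpp_lfun:
  assumes "box a b \<subseteq> S"
  shows "LPP \<xi> a b \<omega> = lfun a b (\<lambda>p\<in>S. \<xi> p \<omega>)"
  unfolding lfun_def by (rule lpp_local) (use assms in auto)

lemma lpp_lfun_shift:
  assumes "box a b \<subseteq> S"
  shows "LPP \<xi> (shift s a) (shift s b) \<omega> = lfun a b (\<lambda>p\<in>S. \<xi> (shift s p) \<omega>)"
  unfolding lpp_shift lfun_def by (rule lpp_local) (use assms in auto)

lemma shift0: "shift (0,0) p = p" by (simp add: shift_def)

lemma inj_shift: "inj (shift s)"
  by (rule injI) (auto simp: shift_def prod_eq_iff)

context prob_space
begin

lemma indep_reindex:
  assumes ind: "indep_vars (\<lambda>_. N) X UNIV" and f: "inj f"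
  shows "indep_vars (\<lambda>_. N) (\<lambda>i. X (f i)) UNIV"
  unfolding indep_vars_def2
proof (intro conjI ballI)
  fix i show "random_variable N (X (f i))" using ind unfolding indep_vars_def2 by auto
next
  have I: "indep_sets (\<lambda>i. {X i -` A \<inter> space M |A. A \<in> sets N}) UNIV"
    using ind unfolding indep_vars_def2 by auto
  show "indep_sets (\<lambda>i. {X (f i) -` A \<inter> space M |A. A \<in> sets N}) UNIV"
  proof (rule indep_setsI)
    fix i show "{X (f i) -` A \<inter> space M |A. A \<in> sets N} \<subseteq> events"
      using I unfolding indep_sets_def by auto
  next
    fix A J assume J: "J \<noteq> {}" "J \<subseteq> UNIV" "finite J"
      and A: "\<forall>j\<in>J. A j \<in> {X (f j) -` A \<inter> space M |A. A \<in> sets N}"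
    define B where "B i = A (inv f i)" for i
    have B: "\<forall>i\<in>f ` J. B i \<in> {X i -` A \<inter> space M |A. A \<in> sets N}"
      using A f by (auto simp: B_def inv_f_f)
    have "prob (\<Inter>i\<in>f ` J. B i) = (\<Prod>i\<in>f ` J. prob (B i))"
      using indep_setsD[OF I _ _ _ B] J by auto
    moreover have "(\<Inter>i\<in>f ` J. B i) = (\<Inter>j\<in>J. A j)" using f by (auto simp: B_def inv_f_f)
    moreover have "(\<Prod>i\<in>f ` J. prob (B i)) = (\<Prod>j\<in>J. prob (A j))"
      using f by (subst prod.reindex) (auto simp: B_def inv_f_f inj_on_def)
    ultimately show "prob (\<Inter>j\<in>J. A j) = (\<Prod>j\<in>J. prob (A j))" by simp
  qed
qed

lemma law_restrict:
  assumes ind: "indep_vars (\<lambda>_. borel) \<xi> UNIV" and law: "\<And>v. distr M borel (\<xi> v) = \<nu>"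
    and S: "S \<noteq> {}"
  shows "distr M (PiM S (\<lambda>_. borel)) (\<lambda>\<omega>. \<lambda>p\<in>S. \<xi> (shift s p) \<omega>) = PiM S (\<lambda>_. \<nu>)"
proof -
  have ind2: "indep_vars (\<lambda>_. borel) (\<lambda>p. \<xi> (shift s p)) UNIV"
    by (rule indep_reindex[OF ind inj_shift])
  have rv: "random_variable borel (\<xi> (shift s p))" for p
    using ind2 unfolding indep_vars_def2 by (cases p) auto
  have "indep_vars (\<lambda>_. borel) (\<lambda>p. \<xi> (shift s p)) S"
    by (rule indep_vars_subset[OF ind2]) auto
  then have "distr M (PiM S (\<lambda>_. borel)) (\<lambda>\<omega>. \<lambda>p\<in>S. \<xi> (shift s p) \<omega>) = PiM S (\<lambda>p. distr M borel (\<xi> (shift s p)))"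
    using indep_vars_iff_distr_eq_PiM[OF S rv] by simp
  also have "\<dots> = PiM S (\<lambda>_. \<nu>)" using law by simp
  finally show ?thesis .
qed

lemma lpp_shift_distr:
  assumes ind: "indep_vars (\<lambda>_. borel) \<xi> UNIV" and law: "\<And>v. distr M borel (\<xi> v) = \<nu>"
    and b: "pt_le (1,1) b"
  shows "distr M borel (LPP \<xi> (shift s (1,1)) (shift s b)) = distr M borel (LPP \<xi> (1,1) b)"
proof -
  define S where "S = box (1,1) b"
  have S: "S \<noteq> {}" using b by (auto simp: S_def box_def pt_le_def)
  have rv: "random_variable borel (\<xi> p)" for p
    using ind unfolding indep_vars_def2 by (cases p) auto
  have gen: "distr M borel (LPP \<xi> (shift t (1,1)) (shift t b)) = distr (PiM S (\<lambda>_. \<nu>)) borel (lfun (1,1) b)" for t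
  proof -
    have Y: "(\<lambda>\<omega>. \<lambda>p\<in>S. \<xi> (shift t p) \<omega>) \<in> measurable M (PiM S (\<lambda>_. borel))"
      using rv by (intro measurable_restrict) auto
    have F: "lfun (1,1) b \<in> borel_measurable (PiM S (\<lambda>_. borel))"
      by (rule lfun_meas) (simp add: S_def)
    have bS: "box (1,1) b \<subseteq> S" by (simp add: S_def)
    have "LPP \<xi> (shift t (1,1)) (shift t b) = lfun (1,1) b \<circ> (\<lambda>\<omega>. \<lambda>p\<in>S. \<xi> (shift t p) \<omega>)"
      by (rule ext) (simp add: lpp_lfun_shift[OF bS])
    then have "distr M borel (LPP \<xi> (shift t (1,1)) (shift t b)) = distr (distr M (PiM S (\<lambda>_. borel)) (\<lambda>\<omega>. \<lambda>p\<in>S. \<xi> (shift t p) \<omega>)) borel (lfun (1,1) b)"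
      using distr_distr[OF F Y] by simp
    also have "\<dots> = distr (PiM S (\<lambda>_. \<nu>)) borel (lfun (1,1) b)"
      using law_restrict[OF ind law S] by simp
    finally show ?thesis .
  qed
  show ?thesis using gen[of s] gen[of "(0,0)"] by (simp add: shift0)
qed

lemma indep_regions:
  assumes ind: "indep_vars (\<lambda>_. borel) \<xi> UNIV" and LU: "L \<inter> U = {}"
    and SA: "SA \<in> sets (PiM L (\<lambda>_. borel))" and SB: "SB \<in> sets (PiM U (\<lambda>_. borel))"
  shows "prob ({\<omega>\<in>space M. (\<lambda>p\<in>L. \<xi> p \<omega>) \<in> SA} \<inter> {\<omega>\<in>space M. (\<lambda>p\<in>U. \<xi> p \<omega>) \<in> SB})
       = prob {\<omega>\<in>space M. (\<lambda>p\<in>L. \<xi> p \<omega>) \<in> SA} * prob {\<omega>\<in>space M. (\<lambda>p\<in>U. \<xi> p \<omega>) \<in> SB}"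
proof -
  have iv: "indep_var (PiM L (\<lambda>_. borel)) (\<lambda>\<omega>. \<lambda>p\<in>L. \<xi> p \<omega>) (PiM U (\<lambda>_. borel)) (\<lambda>\<omega>. \<lambda>p\<in>U. \<xi> p \<omega>)"
    by (rule indep_var_restrict[OF ind LU]) auto
  have "prob ((\<lambda>x. ((\<lambda>p\<in>L. \<xi> p x), (\<lambda>p\<in>U. \<xi> p x))) -` (SA \<times> SB) \<inter> space M) =
    prob ((\<lambda>\<omega>. \<lambda>p\<in>L. \<xi> p \<omega>) -` SA \<inter> space M) * prob ((\<lambda>\<omega>. \<lambda>p\<in>U. \<xi> p \<omega>) -` SB \<inter> space M)"
    by (rule indep_varD[OF iv SA SB])
  moreover have "(\<lambda>x. ((\<lambda>p\<in>L. \<xi> p x), (\<lambda>p\<in>U. \<xi> p x))) -` (SA \<times> SB) \<inter> space M =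
     {\<omega>\<in>space M. (\<lambda>p\<in>L. \<xi> p \<omega>) \<in> SA} \<inter> {\<omega>\<in>space M. (\<lambda>p\<in>U. \<xi> p \<omega>) \<in> SB}" by auto
  moreover have "(\<lambda>\<omega>. \<lambda>p\<in>L. \<xi> p \<omega>) -` SA \<inter> space M = {\<omega>\<in>space M. (\<lambda>p\<in>L. \<xi> p \<omega>) \<in> SA}" by auto
  moreover have "(\<lambda>\<omega>. \<lambda>p\<in>U. \<xi> p \<omega>) -` SB \<inter> space M = {\<omega>\<in>space M. (\<lambda>p\<in>U. \<xi> p \<omega>) \<in> SB}" by auto
  ultimately show ?thesis by simp
qed

end

lemma lpp_rv:
  assumes rv: "\<And>p. \<xi> p \<in> borel_measurable M"
  shows "(\<lambda>\<omega>. LPP \<xi> a b \<omega>) \<in> borel_measurable M"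
proof -
  have Y: "(\<lambda>\<omega>. \<lambda>p\<in>box a b. \<xi> p \<omega>) \<in> measurable M (PiM (box a b) (\<lambda>_. borel))"
    using rv by (intro measurable_restrict) auto
  have F: "lfun a b \<in> borel_measurable (PiM (box a b) (\<lambda>_. borel))" by (rule lfun_meas) simp
  have "(\<lambda>\<omega>. LPP \<xi> a b \<omega>) = (\<lambda>\<omega>. lfun a b (\<lambda>p\<in>box a b. \<xi> p \<omega>))"
    by (rule ext) (rule lpp_lfun, simp)
  then show ?thesis using measurable_comp[OF Y F] by (simp add: o_def)
qed

context prob_space
begin

lemma core:
  fixes Z :: "int set" and vz :: "int \<Rightarrow> pt" and e e' :: "int \<Rightarrow> real" and n :: int
    and h t T es :: real and vs :: pt
  assumes ind: "indep_vars (\<lambda>_. borel) \<xi> UNIV"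
    and nn: "AE \<omega> in M. \<forall>p. 0 \<le> \<xi> p \<omega>"
    and Z: "finite Z"
    and vz1: "\<And>z. z \<in> Z \<Longrightarrow> pt_le (1,1) (vz z)"
    and vzn: "\<And>z. z \<in> Z \<Longrightarrow> fst (vz z) + snd (vz z) = n"
    and vzs: "\<And>z. z \<in> Z \<Longrightarrow> pt_le (fst (vz z) + 1, snd (vz z) + 1) vs"
    and Bc: "\<And>z. z \<in> Z \<Longrightarrow> prob {\<omega>\<in>space M. LPP \<xi> (fst (vz z) + 1, snd (vz z) + 1) vs \<omega> - e' z < - h} \<le> 1/2"
    and est: "\<And>z. z \<in> Z \<Longrightarrow> es + T \<le> e z + e' z + t - h"
  shows "prob (\<Union>z\<in>Z. {\<omega>\<in>space M. LPP \<xi> (1,1) (vz z) \<omega> - e z > t}) \<le> 2 * prob {\<omega>\<in>space M. LPP \<xi> (1,1) vs \<omega> - es > T}"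
proof -
  have rv: "\<And>p. \<xi> p \<in> borel_measurable M"
    using ind unfolding indep_vars_def2 by auto
  define L where "L = {p::pt. fst p + snd p \<le> n}"
  define U where "U = {p::pt. fst p + snd p > n}"
  have LU: "L \<inter> U = {}" by (auto simp: L_def U_def)
  define up where "up z = (fst (vz z) + 1, snd (vz z) + 1)" for z
  define E where "E z = {\<omega>\<in>space M. LPP \<xi> (1,1) (vz z) \<omega> - e z > t}" for z
  define A where "A z = E z - (\<Union>z'\<in>{z'\<in>Z. z' < z}. E z')" for z
  define B where "B z = {\<omega>\<in>space M. LPP \<xi> (up z) vs \<omega> - e' z \<ge> - h}" for z
  define ES where "ES = {\<omega>\<in>space M. LPP \<xi> (1,1) vs \<omega> - es > T}"
  have Emeas: "E z \<in> events" for z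
    unfolding E_def using lpp_rv[OF rv] by measurable
  have Ameas: "A z \<in> events" for z
    unfolding A_def using Emeas Z by (intro sets.Diff sets.finite_UN) auto
  have Bmeas: "B z \<in> events" for z
    unfolding B_def using lpp_rv[OF rv] by measurable
  have ESmeas: "ES \<in> events"
    unfolding ES_def using lpp_rv[OF rv] by measurable
  have UA: "(\<Union>z\<in>Z. E z) = (\<Union>z\<in>Z. A z)"
  proof
    show "(\<Union>z\<in>Z. A z) \<subseteq> (\<Union>z\<in>Z. E z)" by (auto simp: A_def)
  next
    show "(\<Union>z\<in>Z. E z) \<subseteq> (\<Union>z\<in>Z. A z)"
    proof
      fix \<omega> assume "\<omega> \<in> (\<Union>z\<in>Z. E z)"
      then have ne: "{z\<in>Z. \<omega> \<in> E z} \<noteq> {}" by auto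
      define z0 where "z0 = Min {z\<in>Z. \<omega> \<in> E z}"
      have z0in: "z0 \<in> {z\<in>Z. \<omega> \<in> E z}" unfolding z0_def using Z ne by (intro Min_in) auto
      have fin: "finite {z\<in>Z. \<omega> \<in> E z}" using Z by simp
      have le: "z0 \<le> z'" if "z' \<in> Z" "\<omega> \<in> E z'" for z'
        unfolding z0_def using fin that by (intro Min_le) simp_all
      have nE: "\<And>z'. z' \<in> Z \<Longrightarrow> z' < z0 \<Longrightarrow> \<omega> \<notin> E z'"
        using le by (meson not_le)
      have "\<omega> \<in> A z0" unfolding A_def using z0in nE by blast
      then show "\<omega> \<in> (\<Union>z\<in>Z. A z)" using z0in by blast
    qed
  qed
  have disjA: "disjoint_family_on A Z"
    unfolding disjoint_family_on_def
  proof (intro ballI impI)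
    fix z1 z2 assume "z1 \<in> Z" "z2 \<in> Z" "z1 \<noteq> z2"
    have AE: "A z \<subseteq> E z" for z unfolding A_def by blast
    have AD: "A y \<inter> E x = {}" if "x \<in> Z" "x < y" for x y unfolding A_def using that by blast
    consider "z1 < z2" | "z2 < z1" using \<open>z1 \<noteq> z2\<close> by linarith
    then show "A z1 \<inter> A z2 = {}"
    proof cases
      case 1 then show ?thesis using AE[of z1] AD[OF \<open>z1 \<in> Z\<close> 1] by blast
    next
      case 2 then show ?thesis using AE[of z2] AD[OF \<open>z2 \<in> Z\<close> 2] by blast
    qed
  qed
  have indAB: "prob (A z \<inter> B z) = prob (A z) * prob (B z)" if z: "z \<in> Z" for z
  proof -
    have boxL: "box (1,1) (vz z') \<subseteq> L" if "z' \<in> Z" for z'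
      using vzn[OF that] by (auto simp: box_def L_def pt_le_def)
    have boxU: "box (up z) vs \<subseteq> U"
      using vzn[OF z] by (auto simp: box_def U_def pt_le_def up_def)
    define SE where "SE z' = {x \<in> space (PiM L (\<lambda>_. borel)). lfun (1,1) (vz z') x - e z' > t}" for z'
    define SA where "SA = SE z - (\<Union>z'\<in>{z'\<in>Z. z' < z}. SE z')"
    define SB where "SB = {y \<in> space (PiM U (\<lambda>_. borel)). lfun (up z) vs y - e' z \<ge> - h}"
    have SEm: "SE z' \<in> sets (PiM L (\<lambda>_. borel))" if "z' \<in> Z" for z'
    proof -
      have [measurable]: "lfun (1,1) (vz z') \<in> borel_measurable (PiM L (\<lambda>_. borel))"
        by (rule lfun_meas[OF boxL[OF that]])
      show ?thesis unfolding SE_def by measurable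
    qed
    have SAm: "SA \<in> sets (PiM L (\<lambda>_. borel))"
      unfolding SA_def using SEm z Z by (intro sets.Diff sets.finite_UN) auto
    have SBm: "SB \<in> sets (PiM U (\<lambda>_. borel))"
    proof -
      have [measurable]: "lfun (up z) vs \<in> borel_measurable (PiM U (\<lambda>_. borel))"
        by (rule lfun_meas[OF boxU])
      show ?thesis unfolding SB_def by measurable
    qed
    have YL: "(\<lambda>p\<in>L. \<xi> p \<omega>) \<in> space (PiM L (\<lambda>_. borel))" for \<omega> by (simp add: space_PiM)
    have YU: "(\<lambda>p\<in>U. \<xi> p \<omega>) \<in> space (PiM U (\<lambda>_. borel))" for \<omega> by (simp add: space_PiM)
    have EA: "\<omega> \<in> E z' \<longleftrightarrow> \<omega> \<in> space M \<and> (\<lambda>p\<in>L. \<xi> p \<omega>) \<in> SE z'" if "z' \<in> Z" for z' \<omega>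
      unfolding E_def SE_def using lpp_lfun[OF boxL[OF that], of \<xi> \<omega>] YL by auto
    have Aeq: "A z = {\<omega>\<in>space M. (\<lambda>p\<in>L. \<xi> p \<omega>) \<in> SA}"
      unfolding A_def SA_def using EA z by auto
    have Beq: "B z = {\<omega>\<in>space M. (\<lambda>p\<in>U. \<xi> p \<omega>) \<in> SB}"
      unfolding B_def SB_def using lpp_lfun[OF boxU, of \<xi>] YU by auto
    show ?thesis unfolding Aeq Beq by (rule indep_regions[OF ind LU SAm SBm])
  qed
  have PB: "prob (B z) \<ge> 1/2" if z: "z \<in> Z" for z
  proof -
    have "space M - B z = {\<omega>\<in>space M. LPP \<xi> (up z) vs \<omega> - e' z < - h}"
      unfolding B_def by auto
    then have "prob (space M - B z) \<le> 1/2" using Bc[OF z] by (simp add: up_def)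
    then show ?thesis using prob_compl[OF Bmeas] by simp
  qed
  have PA: "prob (A z) \<le> 2 * prob (A z \<inter> B z)" if z: "z \<in> Z" for z
  proof -
    have "prob (A z) * (1/2) \<le> prob (A z) * prob (B z)"
      using PB[OF z] by (intro mult_left_mono) auto
    then show ?thesis using indAB[OF z] by simp
  qed
  have disjAB: "disjoint_family_on (\<lambda>z. A z \<inter> B z) Z"
    using disjA unfolding disjoint_family_on_def by auto
  have "prob (\<Union>z\<in>Z. E z) = prob (\<Union>z\<in>Z. A z)" using UA by simp
  also have "\<dots> = (\<Sum>z\<in>Z. prob (A z))"
    by (rule measure_finite_Union[OF Z]) (use Ameas disjA in \<open>auto simp: emeasure_eq_measure\<close>)
  also have "\<dots> \<le> (\<Sum>z\<in>Z. 2 * prob (A z \<inter> B z))"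
    by (rule sum_mono) (rule PA)
  also have "\<dots> = 2 * prob (\<Union>z\<in>Z. A z \<inter> B z)"
    by (subst measure_finite_Union[OF Z])
       (use Ameas Bmeas disjAB in \<open>auto simp: emeasure_eq_measure sum_distrib_left\<close>)
  also have "prob (\<Union>z\<in>Z. A z \<inter> B z) \<le> prob ES"
  proof (rule finite_measure_mono_AE[OF _ ESmeas])
    show "AE \<omega> in M. \<omega> \<in> (\<Union>z\<in>Z. A z \<inter> B z) \<longrightarrow> \<omega> \<in> ES"
      using nn
    proof eventually_elim
      case (elim \<omega>)
      show ?case
      proof
        assume "\<omega> \<in> (\<Union>z\<in>Z. A z \<inter> B z)"
        then obtain z where z: "z \<in> Z" and a: "\<omega> \<in> E z" and b: "\<omega> \<in> B z" by (auto simp: A_def)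
        have sp: "\<omega> \<in> space M" using a by (simp add: E_def)
        have "LPP \<xi> (1,1) (vz z) \<omega> + LPP \<xi> (fst (vz z) + 1, snd (vz z) + 1) vs \<omega> \<le> LPP \<xi> (1,1) vs \<omega>"
          by (rule lpp_super[OF vz1[OF z] vzs[OF z]]) (use elim in auto)
        moreover have "LPP \<xi> (1,1) (vz z) \<omega> - e z > t" using a by (simp add: E_def)
        moreover have "LPP \<xi> (up z) vs \<omega> - e' z \<ge> - h" using b by (simp add: B_def)
        ultimately have "LPP \<xi> (1,1) vs \<omega> - es > T" using est[OF z] by (simp add: up_def)
        then show "\<omega> \<in> ES" using sp by (simp add: ES_def)
      qed
    qed
  qed
  finally show ?thesis by (simp add: E_def ES_def)
qed

end

lemma Lup_sub:
  assumes s: "real r powr (2/3) > 0" and v: "v \<in> Lup r w"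
  shows "\<exists>z. v = (int r - z, int r + z) \<and> \<bar>real_of_int (z - w)\<bar> \<le> real r powr (2/3)"
proof -
  define s where "s = real r powr (2/3)"
  obtain u where u: "0 \<le> u" "u \<le> 1"
    and eq: "(real_of_int (fst v), real_of_int (snd v)) = (1 - u) *\<^sub>R (real r - real_of_int w - s, real r + real_of_int w + s) + u *\<^sub>R (real r - real_of_int w + s, real r + real_of_int w - s)"
    using v unfolding Lup_def closed_segment_def s_def by auto
  have e1: "real_of_int (fst v) = real r - real_of_int w - s + 2 * u * s"
    using arg_cong[OF eq, of fst] by (simp add: algebra_simps)
  have e2: "real_of_int (snd v) = real r + real_of_int w + s - 2 * u * s"
    using arg_cong[OF eq, of snd] by (simp add: algebra_simps)
  define z where "z = int r - fst v"
  have "real_of_int z = real_of_int w + s - 2 * u * s" using e1 by (simp add: z_def)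
  moreover have "snd v = int r + z"
  proof -
    have "real_of_int (snd v) = real_of_int (int r + z)" using e1 e2 by (simp add: z_def)
    then show ?thesis by linarith
  qed
  moreover have "\<bar>s - 2 * u * s\<bar> \<le> s"
  proof -
    have "2 * u * s \<le> 2 * s" using u s by (simp add: s_def)
    moreover have "0 \<le> 2 * u * s" using u s by (simp add: s_def)
    ultimately show ?thesis by (simp add: abs_le_iff)
  qed
  ultimately show ?thesis by (intro exI[of _ z]) (auto simp: z_def prod_eq_iff s_def)
qed

lemma Lup_mem:
  assumes s: "real r powr (2/3) > 0"
  shows "(int r - w, int r + w) \<in> Lup r w"
proof -
  define s where "s = real r powr (2/3)"
  have "(real_of_int (int r - w), real_of_int (int r + w)) = (1 - 1/2) *\<^sub>R (real r - real_of_int w - s, real r + real_of_int w + s) + (1/2::real) *\<^sub>R (real r - real_of_int w + s, real r + real_of_int w - s)"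
    by (simp add: prod_eq_iff field_simps)
  then show ?thesis unfolding Lup_def closed_segment_def s_def
    by (simp only: mem_Collect_eq fst_conv snd_conv) (rule exI[of _ "1/2"], simp)
qed

lemma pw_ge:
  fixes \<alpha> L y :: real
  assumes a: "\<alpha> > 0" and L: "L > 0" and y: "y \<ge> L powr (1/\<alpha>)"
  shows "y powr \<alpha> \<ge> L"
proof -
  have "L = (L powr (1/\<alpha>)) powr \<alpha>" using a L by (simp add: powr_powr)
  also have "\<dots> \<le> y powr \<alpha>" using a y by (intro powr_mono2) auto
  finally show ?thesis .
qed

lemma exp_half:
  fixes c \<alpha> x :: real
  assumes c: "c > 0" and a: "\<alpha> > 0" and x: "x \<ge> (ln 2 / c) powr (1/\<alpha>)"
  shows "exp (- c * x powr \<alpha>) \<le> 1/2"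
proof -
  have "x powr \<alpha> \<ge> ln 2 / c" by (rule pw_ge[OF a _ x]) (use c in simp)
  then have "c * x powr \<alpha> \<ge> ln 2" using c by (simp add: field_simps)
  then have "exp (- c * x powr \<alpha>) \<le> exp (- ln 2)" by simp
  also have "\<dots> = 1/2" by (simp add: exp_minus)
  finally show ?thesis .
qed

lemma final_exp:
  fixes cU \<alpha> \<theta> :: real
  assumes cU: "cU > 0" and a: "\<alpha> > 0" and th: "\<theta> > 0"
    and big: "\<theta> \<ge> (ln 2 / (cU / (2 * 8 powr \<alpha>))) powr (1/\<alpha>)"
  shows "2 * exp (- cU * (\<theta>/8) powr \<alpha>) \<le> exp (- (cU / (2 * 8 powr \<alpha>)) * \<theta> powr \<alpha>)"
proof -
  define c where "c = cU / (2 * 8 powr \<alpha>)"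
  have c: "c > 0" using cU by (simp add: c_def)
  have "\<theta> powr \<alpha> \<ge> ln 2 / c" by (rule pw_ge[OF a _ big[folded c_def]]) (use c in simp)
  then have L: "c * \<theta> powr \<alpha> \<ge> ln 2" using c by (simp add: field_simps)
  have "cU * (\<theta>/8) powr \<alpha> = 2 * c * \<theta> powr \<alpha>"
    using th by (simp add: c_def powr_divide)
  moreover have X: "exp (ln 2 - X) = 2 * exp (- X)" for X :: real
  proof -
    have "exp (ln 2 - X) = exp (ln 2 + (-X))" by simp
    also have "\<dots> = exp (ln 2) * exp (-X)" by (rule exp_add)
    also have "\<dots> = 2 * exp (-X)" by simp
    finally show ?thesis .
  qed
  ultimately have "2 * exp (- cU * (\<theta>/8) powr \<alpha>) = exp (ln 2 - 2 * c * \<theta> powr \<alpha>)"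
    by simp
  also have "\<dots> \<le> exp (- c * \<theta> powr \<alpha>)" using L by simp
  finally show ?thesis by (simp add: c_def)
qed

lemma powers6:
  fixes r :: real
  assumes r: "r \<ge> 1"
  defines "q \<equiv> r powr (1/6)"
  shows "q \<ge> 1" "r = q^6" "r powr (1/3) = q^2" "r powr (2/3) = q^4" "r powr (5/6) = q^5"
proof -
  have r0: "r > 0" using r by simp
  have gen: "r powr (real n / 6) = q ^ n" for n :: nat
  proof -
    have "q ^ n = q powr real n" using r0 by (simp add: q_def powr_realpow)
    also have "\<dots> = r powr (real n / 6)" by (simp add: q_def powr_powr)
    finally show ?thesis by simp
  qed
  show "q \<ge> 1" using r by (simp add: q_def ge_one_powr_ge_zero)
  show "r = q^6" using gen[of 6] r0 by simp
  show "r powr (1/3) = q^2" using gen[of 2] by simp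
  show "r powr (2/3) = q^4" using gen[of 4] by simp
  show "r powr (5/6) = q^5" using gen[of 5] by simp
qed

lemma estimate:
  fixes q K G H g1 \<mu> z w a1 a2 a3 b1 b2 b3 Ez E' Es :: real
  assumes q: "q \<ge> 1" and K: "K > 0" and G: "G > 0" and H: "H > 0"
    and w: "\<bar>w\<bar> \<le> K * q^5" and zw: "\<bar>z - w\<bar> \<le> q^4"
    and Ez: "Ez = \<mu> * q^6 - G * z^2 / q^6 + a1 + b1" and a1: "a1 \<ge> - H * z^4 / (q^6)^3" and b1: "b1 \<ge> - g1 * q^2"
    and E': "E' = \<mu> * q^6 - G * (2*w - z)^2 / q^6 + a2 + b2" and a2: "a2 \<ge> - H * (2*w - z)^4 / (q^6)^3" and b2: "b2 \<ge> - g1 * q^2"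
    and Es: "Es = \<mu> * (2 * q^6) - G * (2*w)^2 / (2 * q^6) + a3 + b3" and a3: "a3 \<le> 0" and b3: "b3 \<le> 0"
  shows "Es - (2*G + 2*H*(K+1)^4 + 2*g1) * q^2 \<le> Ez + E'"
proof -
  have q0: "q > 0" using q by simp
  have q45: "q^4 \<le> q^5" using q by (simp add: power_increasing)
  have zb: "\<bar>z\<bar> \<le> (K+1) * q^5" using w zw q45 by (simp add: algebra_simps)
  have z'b: "\<bar>2*w - z\<bar> \<le> (K+1) * q^5"
  proof -
    have "\<bar>2*w - z\<bar> \<le> \<bar>w\<bar> + \<bar>z - w\<bar>" by linarith
    then show ?thesis using w zw q45 by (simp add: algebra_simps)
  qed
  have quart: "H * x^4 / (q^6)^3 \<le> H * (K+1)^4 * q^2" if xb: "\<bar>x\<bar> \<le> (K+1) * q^5" for x :: real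
  proof -
    have "x^4 = \<bar>x\<bar>^4" by (simp add: power_even_abs)
    also have "\<dots> \<le> ((K+1) * q^5)^4" using xb by (intro power_mono) auto
    finally have "x^4 \<le> (K+1)^4 * q^20" by (simp add: power_mult_distrib power_mult[symmetric])
    then have "H * x^4 \<le> H * ((K+1)^4 * q^20)" using H by (intro mult_left_mono) auto
    also have "\<dots> = (H * (K+1)^4 * q^2) * (q^6)^3" by (simp add: power_mult[symmetric] power_add[symmetric])
    finally show ?thesis using q0 by (simp add: divide_le_eq)
  qed
  have sq: "G * z^2 / q^6 + G * (2*w - z)^2 / q^6 - G * (2*w)^2 / (2 * q^6) = 2 * G * (z - w)^2 / q^6"
    using q0 by (simp add: field_simps power2_eq_square)
  have sq2: "2 * G * (z - w)^2 / q^6 \<le> 2 * G * q^2"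
  proof -
    have "(z - w)^2 = \<bar>z - w\<bar>^2" by simp
    also have "\<dots> \<le> (q^4)^2" using zw by (intro power_mono) auto
    finally have "(z-w)^2 \<le> q^8" by (simp add: power_mult[symmetric])
    then have "2 * G * (z - w)^2 \<le> 2 * G * q^8" using G by (intro mult_left_mono) auto
    also have "\<dots> = (2 * G * q^2) * q^6" by (simp add: power_add[symmetric])
    finally show ?thesis using q0 by (simp add: divide_le_eq)
  qed
  have "Ez + E' - Es = - (G * z^2 / q^6 + G * (2*w - z)^2 / q^6 - G * (2*w)^2 / (2 * q^6)) + a1 + a2 - a3 + b1 + b2 - b3"
    using Ez E' Es by (simp add: algebra_simps)
  also have "\<dots> = - (2 * G * (z - w)^2 / q^6) + a1 + a2 - a3 + b1 + b2 - b3" using sq by simp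
  finally have "Ez + E' - Es = - (2 * G * (z - w)^2 / q^6) + a1 + a2 - a3 + b1 + b2 - b3" .
  moreover have "a1 \<ge> - (H * (K+1)^4 * q^2)"
  proof -
    have "- H * z^4 / (q^6)^3 = - (H * z^4 / (q^6)^3)" by simp
    then show ?thesis using a1 quart[OF zb] by linarith
  qed
  moreover have "a2 \<ge> - (H * (K+1)^4 * q^2)"
  proof -
    have "- H * (2*w - z)^4 / (q^6)^3 = - (H * (2*w - z)^4 / (q^6)^3)" by simp
    then show ?thesis using a2 quart[OF z'b] by linarith
  qed
  moreover have "(2*G + 2*H*(K+1)^4 + 2*g1) * q^2 = 2 * G * q^2 + 2 * (H * (K+1)^4 * q^2) + 2 * (g1 * q^2)"
    by (simp add: algebra_simps)
  moreover have "- g1 * q^2 = - (g1 * q^2)" by simp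
  ultimately show ?thesis using sq2 a3 b1 b2 b3 by linarith
qed

lemma distr_prob_eq:
  assumes f: "f \<in> borel_measurable M" and g: "g \<in> borel_measurable M"
    and D: "distr M borel f = distr M borel g" and S: "S \<in> sets borel"
  shows "measure M {\<omega>\<in>space M. f \<omega> \<in> S} = measure M {\<omega>\<in>space M. g \<omega> \<in> S}"
proof -
  have "measure M {\<omega>\<in>space M. f \<omega> \<in> S} = measure M (f -` S \<inter> space M)"
    by (intro arg_cong[where f="measure M"]) auto
  also have "\<dots> = measure (distr M borel f) S" by (rule measure_distr[OF f S, symmetric])
  also have "\<dots> = measure (distr M borel g) S" using D by simp
  also have "\<dots> = measure M (g -` S \<inter> space M)" by (rule measure_distr[OF g S])
  also have "\<dots> = measure M {\<omega>\<in>space M. g \<omega> \<in> S}"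
    by (intro arg_cong[where f="measure M"]) auto
  finally show ?thesis .
qed

lemma nonneg_AE:
  fixes \<xi> :: "pt \<Rightarrow> 'a \<Rightarrow> real"
  assumes rv: "\<And>p. \<xi> p \<in> borel_measurable M"
    and law: "\<And>v. distr M borel (\<xi> v) = \<nu>" and supp: "emeasure \<nu> {..<0} = 0"
  shows "AE \<omega> in M. \<forall>p::pt. 0 \<le> \<xi> p \<omega>"
proof -
  have "AE \<omega> in M. 0 \<le> \<xi> p \<omega>" for p
  proof -
    have S: "{..<(0::real)} \<in> sets borel" by simp
    have "emeasure M (\<xi> p -` {..<0} \<inter> space M) = emeasure (distr M borel (\<xi> p)) {..<0}"
      by (rule emeasure_distr[symmetric, OF rv S])
    also have "\<dots> = 0" using law supp by simp
    finally have N: "\<xi> p -` {..<0} \<inter> space M \<in> null_sets M"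
      using measurable_sets[OF rv S] by (simp add: null_sets_def)
    show ?thesis by (rule AE_I'[OF N]) auto
  qed
  then show ?thesis by (simp add: AE_all_countable)
qed

theorem lemmaA2:
  fixes M :: "'w measure" and \<xi> :: "pt \<Rightarrow> 'w \<Rightarrow> real" and \<nu> :: "real measure"
    and \<mu> \<alpha> :: real
  assumes prob: "prob_space M"
    and iid: "prob_space.indep_vars M (\<lambda>_. borel) \<xi> UNIV"
    and law: "\<And>v. distr M borel (\<xi> v) = \<nu>"
    and supp: "emeasure \<nu> {..<0} = 0"
    and integ: "\<And>r. integrable M (Xrz \<xi> r 0)"
    and mu: "(\<lambda>r. (\<integral>\<omega>. Xrz \<xi> r 0 \<omega> \<partial>M) / real r) \<longlonglongrightarrow> \<mu>"
    and LS: "\<exists>\<rho> G H g1 g2 :: real. \<rho> > 0 \<and> G > 0 \<and> H > 0 \<and> g1 > 0 \<and> g2 > 0 \<and>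
      (\<exists>R. \<forall>r\<ge>R. \<forall>z::int. \<bar>real_of_int z\<bar> \<le> \<rho> * real r \<longrightarrow>
         pt_le (1,1) (int r - z, int r + z) \<and>
         (\<exists>a\<in>{- H * real_of_int z ^ 4 / real r ^ 3 .. 0}.
          \<exists>b\<in>{- g1 * real r powr (1/3) .. - g2 * real r powr (1/3)}.
            (\<integral>\<omega>. Xrz \<xi> r z \<omega> \<partial>M) = \<mu> * real r - G * real_of_int z ^ 2 / real r + a + b))"
    and alpha: "\<alpha> > 0"
    and UT: "\<forall>\<epsilon>>0. \<exists>c>0. \<exists>\<theta>0>0. \<exists>r0>0. \<forall>r::nat. real r > r0 \<longrightarrow> (\<forall>\<theta>>\<theta>0. \<forall>z::int.
        \<bar>real_of_int z\<bar> \<le> (1 - \<epsilon>) * real r \<longrightarrow>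
        measure M {\<omega> \<in> space M. Xrz \<xi> r z \<omega> - (\<integral>\<omega>'. Xrz \<xi> r z \<omega>' \<partial>M) > \<theta> * real r powr (1/3)}
          \<le> exp (- c * \<theta> powr \<alpha>))"
    and LT: "\<forall>\<epsilon>>0. \<exists>c>0. \<exists>\<theta>0>0. \<exists>r0>0. \<forall>r::nat. real r > r0 \<longrightarrow> (\<forall>\<theta>>\<theta>0. \<forall>z::int.
        \<bar>real_of_int z\<bar> \<le> (1 - \<epsilon>) * real r \<longrightarrow>
        measure M {\<omega> \<in> space M. Xrz \<xi> r z \<omega> - (\<integral>\<omega>'. Xrz \<xi> r z \<omega>' \<partial>M) < - \<theta> * real r powr (1/3)}
          \<le> exp (- c * \<theta> powr \<alpha>))"
  shows "\<forall>K>0. \<exists>c>0. \<exists>\<theta>0 r0. \<forall>\<theta>>\<theta>0. \<forall>r::nat. real r > r0 \<longrightarrow>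
      (\<forall>w::int. \<bar>real_of_int w\<bar> \<le> K * real r powr (5/6) \<longrightarrow>
        measure M {\<omega> \<in> space M. Ztilde M \<xi> r w \<omega> > \<theta> * real r powr (1/3)}
          \<le> exp (- c * \<theta> powr \<alpha>))"
proof (intro allI impI)
  fix K :: real assume K: "K > 0"
  interpret P: prob_space M by (rule prob)
  have rv: "\<And>p. \<xi> p \<in> borel_measurable M"
    using iid unfolding P.indep_vars_def2 by auto
  have nn: "AE \<omega> in M. \<forall>p::pt. 0 \<le> \<xi> p \<omega>" by (rule nonneg_AE[OF rv law supp])
  have lppm: "(\<lambda>\<omega>. LPP \<xi> a b \<omega>) \<in> borel_measurable M" for a b by (rule lpp_rv[OF rv])
  obtain \<rho> G H g1 g2 :: real and R :: nat where
    pos: "\<rho> > 0" "G > 0" "H > 0" "g1 > 0" "g2 > 0" and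
    LSr: "\<forall>r\<ge>R. \<forall>z::int. \<bar>real_of_int z\<bar> \<le> \<rho> * real r \<longrightarrow>
         pt_le (1,1) (int r - z, int r + z) \<and>
         (\<exists>a\<in>{- H * real_of_int z ^ 4 / real r ^ 3 .. 0}.
          \<exists>b\<in>{- g1 * real r powr (1/3) .. - g2 * real r powr (1/3)}.
            (\<integral>\<omega>. Xrz \<xi> r z \<omega> \<partial>M) = \<mu> * real r - G * real_of_int z ^ 2 / real r + a + b)"
    using LS by (elim exE conjE) (rule that[rotated 5])
  have half: "(0::real) < 1/2" by simp
  obtain cU \<theta>U rU :: real where UTc: "cU > 0" "\<theta>U > 0" "rU > 0" and
    UTr: "\<forall>r::nat. real r > rU \<longrightarrow> (\<forall>\<theta>>\<theta>U. \<forall>z::int. \<bar>real_of_int z\<bar> \<le> (1 - 1/2) * real r \<longrightarrow>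
        measure M {\<omega> \<in> space M. Xrz \<xi> r z \<omega> - (\<integral>\<omega>'. Xrz \<xi> r z \<omega>' \<partial>M) > \<theta> * real r powr (1/3)}
          \<le> exp (- cU * \<theta> powr \<alpha>))"
    using UT[rule_format, OF half] by (elim exE conjE) (rule that)
  obtain cL \<theta>L rL :: real where LTc: "cL > 0" "\<theta>L > 0" "rL > 0" and
    LTr: "\<forall>r::nat. real r > rL \<longrightarrow> (\<forall>\<theta>>\<theta>L. \<forall>z::int. \<bar>real_of_int z\<bar> \<le> (1 - 1/2) * real r \<longrightarrow>
        measure M {\<omega> \<in> space M. Xrz \<xi> r z \<omega> - (\<integral>\<omega>'. Xrz \<xi> r z \<omega>' \<partial>M) < - \<theta> * real r powr (1/3)}
          \<le> exp (- cL * \<theta> powr \<alpha>))"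
    using LT[rule_format, OF half] by (elim exE conjE) (rule that)
  define m where "m = min \<rho> (1/2)"
  have m: "m > 0" "m \<le> \<rho>" "m \<le> 1/2" using pos by (auto simp: m_def)
  define C where "C = 2*G + 2*H*(K+1)^4 + 2*g1"
  define c where "c = cU / (2 * 8 powr \<alpha>)"
  have c: "c > 0" using UTc by (simp add: c_def)
  define \<theta>0 where "\<theta>0 = max (max (4*C) (8*\<theta>U)) (max (2*\<theta>L) (max (2 * (ln 2 / cL) powr (1/\<alpha>)) (max ((ln 2 / c) powr (1/\<alpha>)) 1)))"
  define r0 where "r0 = max (max (real R) rU) (max rL (max 1 (((K+1)/m)^6)))"
  show "\<exists>c>0. \<exists>\<theta>0 r0. \<forall>\<theta>>\<theta>0. \<forall>r::nat. real r > r0 \<longrightarrow>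
      (\<forall>w::int. \<bar>real_of_int w\<bar> \<le> K * real r powr (5/6) \<longrightarrow>
        measure M {\<omega> \<in> space M. Ztilde M \<xi> r w \<omega> > \<theta> * real r powr (1/3)}
          \<le> exp (- c * \<theta> powr \<alpha>))"
  proof (rule exI[of _ c], rule conjI[OF c], rule exI[of _ \<theta>0], rule exI[of _ r0], intro allI impI)
    fix \<theta> :: real and r :: nat and w :: int
    assume th: "\<theta> > \<theta>0" and rr: "real r > r0" and w: "\<bar>real_of_int w\<bar> \<le> K * real r powr (5/6)"
    have rR: "r \<ge> R" using rr by (simp add: r0_def)
    have r1: "real r \<ge> 1" and rrU: "real r > rU" and rrL: "real r > rL" and rK: "real r \<ge> ((K+1)/m)^6"
      using rr by (simp_all add: r0_def)
    have thC: "\<theta> \<ge> 4*C" and thU: "\<theta>/8 > \<theta>U" and thL: "\<theta>/2 > \<theta>L"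
      and thL2: "\<theta>/2 \<ge> (ln 2 / cL) powr (1/\<alpha>)" and thc: "\<theta> \<ge> (ln 2 / c) powr (1/\<alpha>)" and th1: "\<theta> > 0"
      using th by (simp_all add: \<theta>0_def)
    define q where "q = real r powr (1/6)"
    have q1: "q \<ge> 1" and qr: "real r = q^6" and q13: "real r powr (1/3) = q^2"
      and q23: "real r powr (2/3) = q^4" and q56: "real r powr (5/6) = q^5"
      using powers6[OF r1] by (simp_all add: q_def)
    have q0: "q > 0" using q1 by simp
    have qK: "K + 1 \<le> m * q"
    proof -
      have A6: "((K+1)/m)^6 \<le> q^6" using rK qr by linarith
      have "(K+1)/m \<le> q"
      proof (rule ccontr)
        assume "\<not> (K+1)/m \<le> q"
        then have "q < (K+1)/m" by simp
        then have "q^6 < ((K+1)/m)^6" using q0 by (intro power_strict_mono) auto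
        then show False using A6 by linarith
      qed
      then have "K + 1 \<le> q * m" using m(1) by (simp add: divide_le_eq)
      then show ?thesis by (simp add: ac_simps)
    qed
    have wq: "\<bar>real_of_int w\<bar> \<le> K * q^5" using w unfolding q56 .
    define Z where "Z = {z::int. \<bar>real_of_int (z - w)\<bar> \<le> q^4}"
    have Zfin: "finite Z"
    proof -
      have "Z \<subseteq> {w - \<lceil>q^4\<rceil> .. w + \<lceil>q^4\<rceil>}"
      proof
        fix z assume "z \<in> Z"
        then have "\<bar>real_of_int (z - w)\<bar> \<le> q^4" by (simp add: Z_def)
        then have "\<bar>z - w\<bar> \<le> \<lceil>q^4\<rceil>" by linarith
        then have "w - \<lceil>q^4\<rceil> \<le> z \<and> z \<le> w + \<lceil>q^4\<rceil>" by arith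
        then show "z \<in> {w - \<lceil>q^4\<rceil> .. w + \<lceil>q^4\<rceil>}" by simp
      qed
      then show ?thesis by (rule finite_subset) simp
    qed
    have q45: "q^4 \<le> q^5" using q1 by (simp add: power_increasing)
    have Kq: "(K+1) * q^5 \<le> m * real r"
    proof -
      have "(K+1) * q^5 \<le> (m * q) * q^5" using qK q0 by (intro mult_right_mono) auto
      also have "\<dots> = m * q^6" by (simp add: eval_nat_numeral mult.assoc)
      finally show ?thesis using qr by simp
    qed
    have K5: "(K+1) * q^5 = K * q^5 + q^5" by (simp add: algebra_simps)
    have zb: "\<bar>real_of_int z\<bar> \<le> (K+1) * q^5" if "z \<in> Z" for z
    proof -
      have "\<bar>real_of_int (z - w)\<bar> \<le> q^4" using that by (simp add: Z_def)
      moreover have "real_of_int (z - w) = real_of_int z - real_of_int w" by simp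
      ultimately show ?thesis using wq q45 K5 by arith
    qed
    have z'b: "\<bar>real_of_int (2*w - z)\<bar> \<le> (K+1) * q^5" if "z \<in> Z" for z
    proof -
      have "\<bar>real_of_int (z - w)\<bar> \<le> q^4" using that by (simp add: Z_def)
      moreover have "real_of_int (z - w) = real_of_int z - real_of_int w" by simp
      moreover have "real_of_int (2*w - z) = 2 * real_of_int w - real_of_int z" by simp
      ultimately show ?thesis using wq q45 K5 by arith
    qed
    have mr: "m * real r \<le> \<rho> * real r" using m(2) by (intro mult_right_mono) auto
    have mr2: "m * real r \<le> (1 - 1/2) * real r" using m(3) by (intro mult_right_mono) auto
    have zr: "\<bar>real_of_int z\<bar> \<le> \<rho> * real r" if "z \<in> Z" for z
      using zb[OF that] Kq mr by linarith
    have z'r: "\<bar>real_of_int (2*w - z)\<bar> \<le> \<rho> * real r" if "z \<in> Z" for z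
      using z'b[OF that] Kq mr by linarith
    have z'h: "\<bar>real_of_int (2*w - z)\<bar> \<le> (1 - 1/2) * real r" if "z \<in> Z" for z
      using z'b[OF that] Kq mr2 by linarith
    have w2: "\<bar>real_of_int (2*w)\<bar> \<le> 2 * (m * real r)"
    proof -
      have "K * q^5 \<le> (K+1) * q^5" using K5 q0 by simp
      moreover have "\<bar>real_of_int (2*w)\<bar> = 2 * \<bar>real_of_int w\<bar>" by simp
      ultimately show ?thesis using wq Kq by linarith
    qed
    have w2r: "\<bar>real_of_int (2*w)\<bar> \<le> \<rho> * real (2*r)"
      using w2 mr by simp
    have w2h: "\<bar>real_of_int (2*w)\<bar> \<le> (1 - 1/2) * real (2*r)"
      using w2 mr2 by simp
    define vz where "vz z = (int r - z, int r + z)" for z :: int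
    define vs where "vs = (int (2*r) - 2*w, int (2*r) + 2*w)"
    define e where "e z = (\<integral>\<omega>. LPP \<xi> (1,1) (vz z) \<omega> \<partial>M)" for z
    define e' where "e' z = (\<integral>\<omega>. Xrz \<xi> r (2*w - z) \<omega> \<partial>M)" for z
    define es where "es = (\<integral>\<omega>. Xrz \<xi> (2*r) (2*w) \<omega> \<partial>M)"
    have LSz: "pt_le (1,1) (int r - z, int r + z) \<and>
         (\<exists>a\<in>{- H * real_of_int z ^ 4 / real r ^ 3 .. 0}.
          \<exists>b\<in>{- g1 * real r powr (1/3) .. - g2 * real r powr (1/3)}.
            (\<integral>\<omega>. Xrz \<xi> r z \<omega> \<partial>M) = \<mu> * real r - G * real_of_int z ^ 2 / real r + a + b)"
      if "\<bar>real_of_int z\<bar> \<le> \<rho> * real r" for z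
      using LSr rR that by blast
    have LS2: "pt_le (1,1) (int (2*r) - 2*w, int (2*r) + 2*w) \<and>
         (\<exists>a\<in>{- H * real_of_int (2*w) ^ 4 / real (2*r) ^ 3 .. 0}.
          \<exists>b\<in>{- g1 * real (2*r) powr (1/3) .. - g2 * real (2*r) powr (1/3)}.
            (\<integral>\<omega>. Xrz \<xi> (2*r) (2*w) \<omega> \<partial>M) = \<mu> * real (2*r) - G * real_of_int (2*w) ^ 2 / real (2*r) + a + b)"
    proof -
      have "2*r \<ge> R" using rR by simp
      then show ?thesis using LSr w2r by blast
    qed
    have est0: "es - C * q^2 \<le> e z + e' z" if z: "z \<in> Z" for z
    proof -
      obtain a1 b1 where a1: "a1 \<ge> - H * real_of_int z ^ 4 / real r ^ 3" and b1: "b1 \<ge> - g1 * real r powr (1/3)"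
        and E1: "(\<integral>\<omega>. Xrz \<xi> r z \<omega> \<partial>M) = \<mu> * real r - G * real_of_int z ^ 2 / real r + a1 + b1"
        using LSz[OF zr[OF z]] by auto
      obtain a2 b2 where a2: "a2 \<ge> - H * real_of_int (2*w - z) ^ 4 / real r ^ 3" and b2: "b2 \<ge> - g1 * real r powr (1/3)"
        and E2: "(\<integral>\<omega>. Xrz \<xi> r (2*w - z) \<omega> \<partial>M) = \<mu> * real r - G * real_of_int (2*w - z) ^ 2 / real r + a2 + b2"
        using LSz[OF z'r[OF z]] by auto
      obtain a3 b3 where a3: "a3 \<le> 0" and b3: "b3 \<le> - g2 * real (2*r) powr (1/3)"
        and E3: "es = \<mu> * real (2*r) - G * real_of_int (2*w) ^ 2 / real (2*r) + a3 + b3"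
        using LS2 unfolding es_def by auto
      have b3': "b3 \<le> 0"
      proof -
        have "0 \<le> g2 * real (2*r) powr (1/3)" using pos(5) by simp
        then show ?thesis using b3 by linarith
      qed
      have ez: "e z = (\<integral>\<omega>. Xrz \<xi> r z \<omega> \<partial>M)" by (simp add: e_def vz_def Xrz_def)
      have zwq: "\<bar>real_of_int z - real_of_int w\<bar> \<le> q^4" using z by (simp add: Z_def)
      have r2: "real (2*r) = 2 * q^6" using qr by simp
      show ?thesis
        unfolding C_def
      proof (rule estimate[OF q1 K pos(2) pos(3) wq zwq])
        show "e z = \<mu> * q^6 - G * (real_of_int z)^2 / q^6 + a1 + b1" using E1 ez qr by simp
        show "a1 \<ge> - H * (real_of_int z)^4 / (q^6)^3" using a1 qr by simp
        show "b1 \<ge> - g1 * q^2" using b1 q13 by simp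
        show "e' z = \<mu> * q^6 - G * (2 * real_of_int w - real_of_int z)^2 / q^6 + a2 + b2"
          using E2 qr by (simp add: e'_def)
        show "a2 \<ge> - H * (2 * real_of_int w - real_of_int z)^4 / (q^6)^3" using a2 qr by simp
        show "b2 \<ge> - g1 * q^2" using b2 q13 by simp
        show "es = \<mu> * (2 * q^6) - G * (2 * real_of_int w)^2 / (2 * q^6) + a3 + b3"
          using E3 r2 by simp
        show "a3 \<le> 0" by (rule a3)
        show "b3 \<le> 0" by (rule b3')
      qed
    qed
    have vz1: "pt_le (1,1) (vz z)" if z: "z \<in> Z" for z
      using LSz[OF zr[OF z]] by (simp add: vz_def)
    have vzs: "pt_le (fst (vz z) + 1, snd (vz z) + 1) vs" if z: "z \<in> Z" for z
    proof -
      have "pt_le (1,1) (int r - (2*w - z), int r + (2*w - z))" using LSz[OF z'r[OF z]] by blast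
      then show ?thesis by (simp add: vz_def vs_def pt_le_def)
    qed
    have Bc: "P.prob {\<omega>\<in>space M. LPP \<xi> (fst (vz z) + 1, snd (vz z) + 1) vs \<omega> - e' z < - (\<theta>/2 * q^2)} \<le> 1/2"
      if z: "z \<in> Z" for z
    proof -
      define b where "b = (int r - (2*w - z), int r + (2*w - z))"
      have b1: "pt_le (1,1) b" using LSz[OF z'r[OF z]] by (simp add: b_def)
      have s1: "shift (vz z) (1,1) = (fst (vz z) + 1, snd (vz z) + 1)" by (simp add: shift_def vz_def)
      have s2: "shift (vz z) b = vs" by (simp add: shift_def vz_def vs_def b_def)
      have D: "distr M borel (LPP \<xi> (fst (vz z) + 1, snd (vz z) + 1) vs) = distr M borel (LPP \<xi> (1,1) b)"
        using P.lpp_shift_distr[OF iid law b1, of "vz z"] unfolding s1 s2 .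
      have S: "{..< e' z - \<theta>/2 * q^2} \<in> sets borel" by simp
      have "P.prob {\<omega>\<in>space M. LPP \<xi> (fst (vz z) + 1, snd (vz z) + 1) vs \<omega> - e' z < - (\<theta>/2 * q^2)}
          = P.prob {\<omega>\<in>space M. LPP \<xi> (fst (vz z) + 1, snd (vz z) + 1) vs \<omega> \<in> {..< e' z - \<theta>/2 * q^2}}"
        by (intro arg_cong[where f="measure M"]) auto
      also have "\<dots> = P.prob {\<omega>\<in>space M. LPP \<xi> (1,1) b \<omega> \<in> {..< e' z - \<theta>/2 * q^2}}"
        by (rule distr_prob_eq[OF lppm lppm D S])
      also have "\<dots> = P.prob {\<omega>\<in>space M. Xrz \<xi> r (2*w - z) \<omega> - (\<integral>\<omega>'. Xrz \<xi> r (2*w - z) \<omega>' \<partial>M) < - (\<theta>/2) * real r powr (1/3)}"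
        by (intro arg_cong[where f="measure M"]) (auto simp: Xrz_def b_def e'_def q13)
      also have "\<dots> \<le> exp (- cL * (\<theta>/2) powr \<alpha>)"
        using LTr rrL thL z'h[OF z] by blast
      also have "\<dots> \<le> 1/2" by (rule exp_half[OF LTc(1) alpha thL2])
      finally show ?thesis .
    qed
    have est: "es + \<theta>/4 * q^2 \<le> e z + e' z + \<theta> * q^2 - \<theta>/2 * q^2" if z: "z \<in> Z" for z
    proof -
      have "C * q^2 \<le> \<theta>/4 * q^2" using thC q0 by (intro mult_right_mono) auto
      then show ?thesis using est0[OF z] by linarith
    qed
    have vzn: "fst (vz z) + snd (vz z) = 2 * int r" if "z \<in> Z" for z
      by (simp add: vz_def)
    have core: "P.prob (\<Union>z\<in>Z. {\<omega>\<in>space M. LPP \<xi> (1,1) (vz z) \<omega> - e z > \<theta> * q^2})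
        \<le> 2 * P.prob {\<omega>\<in>space M. LPP \<xi> (1,1) vs \<omega> - es > \<theta>/4 * q^2}"
      by (rule P.core[OF iid nn Zfin vz1 vzn vzs Bc est])
    have UTb: "P.prob {\<omega>\<in>space M. LPP \<xi> (1,1) vs \<omega> - es > \<theta>/4 * q^2} \<le> exp (- cU * (\<theta>/8) powr \<alpha>)"
    proof -
      have p2: "real (2*r) powr (1/3) \<le> 2 * q^2"
      proof -
        have "real (2*r) powr (1/3) = 2 powr (1/3) * real r powr (1/3)"
          by (simp add: powr_mult)
        moreover have "(2::real) powr (1/3) \<le> 2 powr 1" by (intro powr_mono) auto
        moreover have "real r powr (1/3) \<ge> 0" by simp
        ultimately have "real (2*r) powr (1/3) \<le> 2 * real r powr (1/3)"
          by (simp add: mult_right_mono)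
        then show ?thesis using q13 by simp
      qed
      have thr: "\<theta>/8 * real (2*r) powr (1/3) \<le> \<theta>/4 * q^2"
      proof -
        have "\<theta>/8 * real (2*r) powr (1/3) \<le> \<theta>/8 * (2 * q^2)" using p2 th1 by (intro mult_left_mono) auto
        then show ?thesis by simp
      qed
      have Bm: "{\<omega>\<in>space M. Xrz \<xi> (2*r) (2*w) \<omega> - es > \<theta>/8 * real (2*r) powr (1/3)} \<in> sets M"
        using lppm unfolding Xrz_def by measurable
      have "P.prob {\<omega>\<in>space M. LPP \<xi> (1,1) vs \<omega> - es > \<theta>/4 * q^2}
          \<le> P.prob {\<omega>\<in>space M. Xrz \<xi> (2*r) (2*w) \<omega> - es > \<theta>/8 * real (2*r) powr (1/3)}"
        by (rule P.finite_measure_mono[OF _ Bm]) (use thr in \<open>auto simp: Xrz_def vs_def\<close>)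
      also have "\<dots> \<le> exp (- cU * (\<theta>/8) powr \<alpha>)"
      proof -
        have "real (2*r) > rU" using rrU by simp
        then show ?thesis using UTr thU w2h unfolding es_def by blast
      qed
      finally show ?thesis .
    qed
    have Em: "{\<omega>\<in>space M. LPP \<xi> (1,1) (vz z) \<omega> - e z > \<theta> * q^2} \<in> sets M" for z
      using lppm by measurable
    have UEm: "(\<Union>z\<in>Z. {\<omega>\<in>space M. LPP \<xi> (1,1) (vz z) \<omega> - e z > \<theta> * q^2}) \<in> sets M"
      using Em Zfin by (intro sets.finite_UN) auto
    have incl: "{\<omega> \<in> space M. Ztilde M \<xi> r w \<omega> > \<theta> * real r powr (1/3)}
        \<subseteq> (\<Union>z\<in>Z. {\<omega>\<in>space M. LPP \<xi> (1,1) (vz z) \<omega> - e z > \<theta> * q^2})"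
    proof
      fix \<omega> assume "\<omega> \<in> {\<omega> \<in> space M. Ztilde M \<xi> r w \<omega> > \<theta> * real r powr (1/3)}"
      then have sp: "\<omega> \<in> space M" and gt: "\<theta> * q^2 < Ztilde M \<xi> r w \<omega>" using q13 by auto
      have s0: "real r powr (2/3) > 0" using q23 q0 by simp
      have Lsub: "Lup r w \<subseteq> vz ` Z"
      proof
        fix v assume "v \<in> Lup r w"
        then obtain z where "v = (int r - z, int r + z)" "\<bar>real_of_int (z - w)\<bar> \<le> real r powr (2/3)"
          using Lup_sub[OF s0] by blast
        then show "v \<in> vz ` Z" unfolding vz_def Z_def using q23 by auto
      qed
      have Lfin: "finite (Lup r w)" using Lsub Zfin by (meson finite_surj)
      have Lne: "Lup r w \<noteq> {}" using Lup_mem[OF s0] by blast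
      define f where "f v = LPP \<xi> (1,1) v \<omega> - (\<integral>\<omega>'. LPP \<xi> (1,1) v \<omega>' \<partial>M)" for v
      have Zt: "Ztilde M \<xi> r w \<omega> = (SUP v\<in>Lup r w. f v)" by (simp add: Ztilde_def f_def)
      have bdd: "bdd_above (f ` Lup r w)" using Lfin by simp
      obtain v where v: "v \<in> Lup r w" "\<theta> * q^2 < f v"
        using gt unfolding Zt using less_cSUP_iff[OF Lne bdd] by blast
      obtain z where z: "z \<in> Z" "v = vz z" using Lsub v(1) by blast
      have "\<omega> \<in> {\<omega>\<in>space M. LPP \<xi> (1,1) (vz z) \<omega> - e z > \<theta> * q^2}"
        using sp v(2) z(2) by (simp add: f_def e_def)
      then show "\<omega> \<in> (\<Union>z\<in>Z. {\<omega>\<in>space M. LPP \<xi> (1,1) (vz z) \<omega> - e z > \<theta> * q^2})" using z(1) by blast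
    qed
    have "measure M {\<omega> \<in> space M. Ztilde M \<xi> r w \<omega> > \<theta> * real r powr (1/3)}
        \<le> P.prob (\<Union>z\<in>Z. {\<omega>\<in>space M. LPP \<xi> (1,1) (vz z) \<omega> - e z > \<theta> * q^2})"
      by (rule P.finite_measure_mono[OF incl UEm])
    also have "\<dots> \<le> 2 * P.prob {\<omega>\<in>space M. LPP \<xi> (1,1) vs \<omega> - es > \<theta>/4 * q^2}" by (rule core)
    also have "\<dots> \<le> 2 * exp (- cU * (\<theta>/8) powr \<alpha>)" using UTb by simp
    also have "\<dots> \<le> exp (- c * \<theta> powr \<alpha>)"
      unfolding c_def by (rule final_exp[OF UTc(1) alpha th1 thc[unfolded c_def]])
    finally show "measure M {\<omega> \<in> space M. Ztilde M \<xi> r w \<omega> > \<theta> * real r powr (1/3)} \<le> exp (- c * \<theta> powr \<alpha>)" .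
  qed
qed


end
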